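(* Let $\Sigma$ be an arcwise connected metric space and $D\subset\Sigma$ an open subset such that $\overline D$ is not arcwise connected and the boundary $\partial D$ consists of exactly two points. Then $\Sigma\setminus D$ is arcwise connected. *)

theory Defs
  imports "HOL-Analysis.Analysis"
begin

definition arcwise_connected :: "'a::topological_space set \<Rightarrow> bool" where
  "arcwise_connected S \<longleftrightarrow>
     (\<forall>x\<in>S. \<forall>y\<in>S. x \<noteq> y \<longrightarrow>
        (\<exists>g. arc g \<and> path_image g \<subseteq> S \<and> pathstart g = x \<and> pathfinish g = y))"

end

theory Submission
  imports Defs
begin

definition sp :: "real \<Rightarrow> real \<Rightarrow> (real \<Rightarrow> 'a::topological_space) \<Rightarrow> real \<Rightarrow> 'a"
  where "sp a b g \<equiv> \<lambda>x. g((b - a) * x + a)"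

lemma sp_start[simp]: "pathstart (sp a b g) = g a" by (simp add: sp_def pathstart_def)
lemma sp_finish[simp]: "pathfinish (sp a b g) = g b" by (simp add: sp_def pathfinish_def)

lemma path_image_sp:
  fixes g :: "real \<Rightarrow> 'a::topological_space"
  shows "path_image(sp u v g) = (if u \<le> v then g ` {u..v} else g ` {v..u})"
proof -
  have "path_image(sp u v g) = g ` ((\<lambda>x. (v - u) * x + u) ` {0..1})"
    unfolding path_image_def sp_def by (simp add: image_image)
  also have "(\<lambda>x. (v - u) * x + u) ` {0..1} = (if u \<le> v then {u..v} else {v..u})"
    by (simp add: image_affinity_atLeastAtMost)
  finally show ?thesis by simp
qed

lemma path_sp:
  fixes g :: "real \<Rightarrow> 'a::topological_space"
  assumes "path g" "u \<in> {0..1}" "v \<in> {0..1}"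
    shows "path(sp u v g)"
proof -
  have "continuous_on {u..v} g" "continuous_on {v..u} g"
    using assms continuous_on_path by fastforce+
  then have "continuous_on {0..1} (g \<circ> (\<lambda>x. ((v-u) * x+ u)))"
    by (intro continuous_intros; simp add: image_affinity_atLeastAtMost [where c=u])
  then show ?thesis
    by (simp add: path_def sp_def)
qed

lemma aff01:
  fixes x u v :: real
  assumes "x \<in> {0..1}" "u \<in> {0..1}" "v \<in> {0..1}"
  shows "(v - u) * x + u \<in> {0..1}"
proof -
  have e: "(v - u) * x + u = (1 - x) * u + x * v" by (simp add: algebra_simps)
  have "(1 - x) * u \<le> 1 - x" "x * v \<le> x" "0 \<le> (1 - x) * u" "0 \<le> x * v"
    using assms by (auto simp: mult_left_le mult_right_le_one_le)
  then show ?thesis unfolding e by auto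
qed

lemma path_image_sp_subset:
  "u \<in> {0..1} \<Longrightarrow> v \<in> {0..1} \<Longrightarrow> path_image (sp u v g) \<subseteq> path_image g"
  unfolding path_image_def sp_def using aff01 by fastforce

lemma arc_sp:
  fixes g :: "real \<Rightarrow> 'a::topological_space"
  assumes "arc g" "u \<in> {0..1}" "v \<in> {0..1}" "u \<noteq> v"
  shows "arc (sp u v g)"
proof -
  have "path (sp u v g)" using path_sp assms arc_imp_path by blast
  moreover have "inj_on (sp u v g) {0..1}"
  proof (rule inj_onI)
    fix x y :: real assume x: "x \<in> {0..1}" and y: "y \<in> {0..1}" and e: "sp u v g x = sp u v g y"
    have "(v - u) * x + u \<in> {0..1}" "(v - u) * y + u \<in> {0..1}"
      using aff01[OF x assms(2,3)] aff01[OF y assms(2,3)] by auto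
    then have "(v - u) * x + u = (v - u) * y + u"
      using inj_onD[OF arc_imp_inj_on[OF assms(1)], of "(v - u) * x + u" "(v - u) * y + u"] e
      by (simp add: sp_def)
    then have "(v - u) * (x - y) = 0" by (simp add: algebra_simps)
    then show "x = y" using assms(4) by auto
  qed
  ultimately show ?thesis by (simp add: arc_def)
qed


definition conn :: "'a::topological_space set \<Rightarrow> 'a \<Rightarrow> 'a \<Rightarrow> bool" where
  "conn S u v \<longleftrightarrow> u = v \<or> (\<exists>g. arc g \<and> path_image g \<subseteq> S \<and> pathstart g = u \<and> pathfinish g = v)"

lemma conn_sym: "conn S u v \<Longrightarrow> conn S v u"
proof -
  assume "conn S u v"
  then consider "u = v" | g where "arc g" "path_image g \<subseteq> S" "pathstart g = u" "pathfinish g = v"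
    unfolding conn_def by blast
  then show "conn S v u"
  proof cases
    case 1 then show ?thesis by (simp add: conn_def)
  next
    case 2
    then have "arc (reversepath g)" "path_image (reversepath g) \<subseteq> S"
      "pathstart (reversepath g) = v" "pathfinish (reversepath g) = u"
      by (auto simp: arc_reversepath)
    then show ?thesis unfolding conn_def by blast
  qed
qed

lemma conn_trans:
  fixes S :: "'a::metric_space set"
  assumes "conn S u w" "conn S w v"
  shows "conn S u v"
proof (cases "u = w \<or> w = v \<or> u = v")
  case True
  then show ?thesis using assms by (auto simp: conn_def)
next
  case False
  then have uw: "u \<noteq> w" and wv: "w \<noteq> v" and uv: "u \<noteq> v" by auto
  obtain A where A: "arc A" "path_image A \<subseteq> S" "pathstart A = u" "pathfinish A = w"
    using assms(1) uw by (auto simp: conn_def)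
  obtain B where B: "arc B" "path_image B \<subseteq> S" "pathstart B = w" "pathfinish B = v"
    using assms(2) wv by (auto simp: conn_def)
  define T where "T = {0..1} \<inter> A -` path_image B"
  have "closed (path_image B)"
    using B(1) arc_imp_path compact_imp_closed compact_path_image by blast
  then have cT: "closed T"
    unfolding T_def using A(1) arc_imp_path continuous_closed_preimage path_def by blast
  have "A 1 \<in> path_image B" using A(4) B(3) pathstart_in_path_image[of B] by (simp add: pathfinish_def)
  then have "1 \<in> T" unfolding T_def by auto
  then have Tne: "T \<noteq> {}" by auto
  have bT: "bdd_below T" unfolding T_def by (rule bdd_belowI[of _ 0]) auto
  define t where "t = Inf T"
  have tT: "t \<in> T" unfolding t_def using closed_contains_Inf[OF Tne bT cT] .
  have tlow: "\<And>t'. t' \<in> {0..1} \<Longrightarrow> t' < t \<Longrightarrow> A t' \<notin> path_image B"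
    unfolding t_def using cInf_lower[OF _ bT] T_def by fastforce
  have t01: "t \<in> {0..1}" using tT T_def by auto
  obtain s where s01: "s \<in> {0..1}" and ts: "A t = B s"
    using tT unfolding T_def path_image_def by auto
  show ?thesis
  proof (cases "t = 0")
    case True
    then have "u = B s" using ts A(3) by (simp add: pathstart_def)
    then have "s \<noteq> 1" using uv B(4) by (auto simp: pathfinish_def)
    then have "arc (sp s 1 B)" using arc_sp[OF B(1) s01] by auto
    moreover have "path_image (sp s 1 B) \<subseteq> S"
      using path_image_sp_subset[of s 1 B] s01 B(2) by auto
    moreover have "pathstart (sp s 1 B) = u" using \<open>u = B s\<close> by simp
    moreover have "pathfinish (sp s 1 B) = v" by (simp add: B(4)[unfolded pathfinish_def])
    ultimately show ?thesis unfolding conn_def by blast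
  next
    case t0: False
    show ?thesis
    proof (cases "s = 1")
      case True
      then have "A t = v" using ts B(4) by (simp add: pathfinish_def)
      have "arc (sp 0 t A)" using arc_sp[OF A(1) _ t01] t0 by auto
      moreover have "path_image (sp 0 t A) \<subseteq> S"
        using path_image_sp_subset[of 0 t A] t01 A(2) by auto
      moreover have "pathfinish (sp 0 t A) = v" using \<open>A t = v\<close> by simp
      moreover have "pathstart (sp 0 t A) = u" by (simp add: A(3)[unfolded pathstart_def])
      ultimately show ?thesis unfolding conn_def by blast
    next
      case s1: False
      have a1: "arc (sp 0 t A)" using arc_sp[OF A(1) _ t01] t0 by auto
      have a2: "arc (sp s 1 B)" using arc_sp[OF B(1) s01] s1 by auto
      have i1: "path_image (sp 0 t A) \<subseteq> S"
        using path_image_sp_subset[of 0 t A] t01 A(2) by auto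
      have i2: "path_image (sp s 1 B) \<subseteq> S"
        using path_image_sp_subset[of s 1 B] s01 B(2) by auto
      have int: "path_image (sp 0 t A) \<inter> path_image (sp s 1 B) \<subseteq> {pathstart (sp s 1 B)}"
      proof
        fix x assume x: "x \<in> path_image (sp 0 t A) \<inter> path_image (sp s 1 B)"
        then obtain t' where t': "t' \<in> {0..t}" "x = A t'"
          using t01 by (auto simp: path_image_sp)
        have "x \<in> path_image B" using x path_image_sp_subset[of s 1 B] s01 by auto
        then have "\<not> t' < t" using tlow[of t'] t' t01 by auto
        then have "t' = t" using t' by auto
        then show "x \<in> {pathstart (sp s 1 B)}" using t' ts by simp
      qed
      have "arc (sp 0 t A +++ sp s 1 B)"
        by (rule arc_join[OF a1 a2 _ int]) (simp add: ts)
      moreover have "path_image (sp 0 t A +++ sp s 1 B) \<subseteq> S"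
        using path_image_join_subset i1 i2 by blast
      moreover have "pathstart (sp 0 t A +++ sp s 1 B) = u"
      proof -
        have "pathstart (sp 0 t A +++ sp s 1 B) = A 0" by simp
        then show ?thesis using A(3) unfolding pathstart_def by simp
      qed
      moreover have "pathfinish (sp 0 t A +++ sp s 1 B) = v"
      proof -
        have "pathfinish (sp 0 t A +++ sp s 1 B) = B 1" by simp
        then show ?thesis using B(4) unfolding pathfinish_def by simp
      qed
      ultimately show ?thesis unfolding conn_def by blast
    qed
  qed
qed


lemma reach_frontier:
  fixes P :: "'a::metric_space set"
  assumes "closed P" "w \<in> P" "arc g" "pathstart g = w" "t \<in> {0..1}" "g t \<notin> P"
  shows "\<exists>e\<in>frontier P. conn P w e"
proof -
  let ?h = "sp 0 t g"
  have ph: "path ?h" using path_sp[OF arc_imp_path[OF assms(3)], of 0 t] assms(5) by auto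
  have hf: "pathfinish ?h \<notin> P" using assms(6) by simp
  obtain u where u: "0 \<le> u" "u \<le> 1" "\<And>x. 0 \<le> x \<and> x < u \<Longrightarrow> ?h x \<in> interior P"
      "?h u \<notin> interior P" "u = 0 \<or> ?h u \<in> closure P"
    using subpath_to_frontier_explicit[OF ph hf] by blast
  have g0: "g 0 = w" using assms(4) by (simp add: pathstart_def)
  have hu: "?h u = g (t * u)" by (simp add: sp_def)
  have "?h u \<in> P"
  proof (cases "u = 0")
    case True
    have "?h 0 = g 0" by (simp add: sp_def)
    then show ?thesis using True g0 assms(2) by simp
  next
    case False
    then have "?h u \<in> closure P" using u(5) by blast
    then show ?thesis using assms(1) closure_closed by blast
  qed
  then have fr: "?h u \<in> frontier P" using u(4) assms(1) by (simp add: frontier_def closure_closed)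
  have t01: "0 \<le> t" "t \<le> 1" using assms(5) by auto
  have tu01: "t * u \<in> {0..1}" using t01 u(1,2) by (simp add: mult_le_one)
  have "conn P w (?h u)"
  proof (cases "?h u = w")
    case True then show ?thesis by (simp add: conn_def)
  next
    case False
    have tu0: "t * u \<noteq> 0"
    proof
      assume "t * u = 0"
      then have "?h u = g 0" using hu by (simp only:)
      then show False using False g0 by simp
    qed
    have tpos: "t > 0" using t01 tu0 by (cases "t = 0") auto
    have "arc (sp 0 (t*u) g)" using arc_sp[OF assms(3) _ tu01] tu0 by auto
    moreover have "path_image (sp 0 (t*u) g) \<subseteq> P"
    proof
      fix z assume "z \<in> path_image (sp 0 (t*u) g)"
      then obtain x where x: "x \<in> {0..t*u}" "z = g x"
        using tu01 by (auto simp: path_image_sp)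
      show "z \<in> P"
      proof (cases "x = t * u")
        case True then show ?thesis using x hu \<open>?h u \<in> P\<close> by simp
      next
        case False
        have "x < t * u" using x False by auto
        then have "x / t < u" using tpos by (simp add: divide_less_eq mult.commute)
        moreover have "0 \<le> x / t" using x tpos by auto
        ultimately have "?h (x / t) \<in> interior P" using u(3) by blast
        moreover have "?h (x / t) = g x" using tpos by (simp add: sp_def)
        ultimately show ?thesis using x interior_subset by auto
      qed
    qed
    moreover have "pathstart (sp 0 (t*u) g) = w" using g0 by simp
    moreover have "pathfinish (sp 0 (t*u) g) = ?h u" using hu by simp
    ultimately show ?thesis unfolding conn_def by blast
  qed
  then show ?thesis using fr by blast
qed

theorem mainTheorem10:
  fixes D :: "'a::metric_space set"
  assumes "arcwise_connected (UNIV :: 'a set)"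
    and "open D"
    and "\<not> arcwise_connected (closure D)"
    and "\<exists>p q. p \<noteq> q \<and> frontier D = {p, q}"
  shows "arcwise_connected (UNIV - D)"
proof -
  obtain p q where pq: "p \<noteq> q" "frontier D = {p, q}" using assms(4) by blast
  define P where "P = closure D"
  have cP: "closed P" unfolding P_def by simp
  have "frontier (closure D) \<subseteq> frontier D"
    unfolding frontier_def using interior_mono[OF closure_subset[of D]] by auto
  then have fP: "frontier P \<subseteq> {p,q}" using pq(2) P_def by simp
  have intD: "interior D = D" using assms(2) interior_open by blast
  have reach: "conn P w p \<or> conn P w q" if w: "w \<in> P" for w
  proof (cases "w = p")
    case True then show ?thesis by (simp add: conn_def)
  next
    case False
    obtain g where g: "arc g" "pathstart g = w" "pathfinish g = p"
      using assms(1) False unfolding arcwise_connected_def by blast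
    show ?thesis
    proof (cases "path_image g \<subseteq> P")
      case True
      then have "conn P w p" unfolding conn_def using g by blast
      then show ?thesis by blast
    next
      case False
      then obtain t where t: "t \<in> {0..1}" "g t \<notin> P" unfolding path_image_def by blast
      obtain e where e: "e \<in> frontier P" "conn P w e"
        using reach_frontier[OF cP w g(1) g(2) t] by blast
      then show ?thesis using fP by blast
    qed
  qed
  have contra: False if pqc: "conn P p q"
  proof -
    have "arcwise_connected P" unfolding arcwise_connected_def
    proof (intro ballI impI)
      fix u v assume u: "u \<in> P" and v: "v \<in> P" and uv: "u \<noteq> v"
      have qpc: "conn P q p" using conn_sym[OF pqc] .
      have cu: "conn P u p" using reach[OF u] conn_trans[OF _ qpc] by blast
      have cv: "conn P v p" using reach[OF v] conn_trans[OF _ qpc] by blast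
      have "conn P u v" using conn_trans[OF cu conn_sym[OF cv]] .
      then show "\<exists>g. arc g \<and> path_image g \<subseteq> P \<and> pathstart g = u \<and> pathfinish g = v"
        using uv unfolding conn_def by blast
    qed
    then show False using assms(3) P_def by simp
  qed
  show ?thesis unfolding arcwise_connected_def
  proof (intro ballI impI)
    fix x y assume x: "x \<in> UNIV - D" and y: "y \<in> UNIV - D" and xy: "x \<noteq> y"
    obtain \<gamma> where \<gamma>: "arc \<gamma>" "pathstart \<gamma> = x" "pathfinish \<gamma> = y"
      using assms(1) xy unfolding arcwise_connected_def by blast
    have "path_image \<gamma> \<subseteq> UNIV - D"
    proof (rule ccontr)
      assume "\<not> path_image \<gamma> \<subseteq> UNIV - D"
      then obtain t where t: "t \<in> {0..1}" "\<gamma> t \<in> D" unfolding path_image_def by blast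
      have t01: "0 \<le> t" "t \<le> 1" using t(1) by auto
      have p\<gamma>: "path \<gamma>" using \<gamma>(1) arc_imp_path by blast
      let ?h1 = "sp t 1 \<gamma>"
      let ?h0 = "sp t 0 \<gamma>"
      have ph1: "path ?h1" using path_sp[OF p\<gamma>, of t 1] t by auto
      have ph0: "path ?h0" using path_sp[OF p\<gamma>, of t 0] t by auto
      have hf1: "pathfinish ?h1 \<notin> D" using y \<gamma>(3)[unfolded pathfinish_def] by simp
      have hf0: "pathfinish ?h0 \<notin> D" using x \<gamma>(2)[unfolded pathstart_def] by simp
      obtain u1 where u1: "0 \<le> u1" "u1 \<le> 1" "\<And>x. 0 \<le> x \<and> x < u1 \<Longrightarrow> ?h1 x \<in> interior D"
          "?h1 u1 \<notin> interior D" "u1 = 0 \<or> ?h1 u1 \<in> closure D"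
        using subpath_to_frontier_explicit[OF ph1 hf1] by blast
      obtain u0 where u0: "0 \<le> u0" "u0 \<le> 1" "\<And>x. 0 \<le> x \<and> x < u0 \<Longrightarrow> ?h0 x \<in> interior D"
          "?h0 u0 \<notin> interior D" "u0 = 0 \<or> ?h0 u0 \<in> closure D"
        using subpath_to_frontier_explicit[OF ph0 hf0] by blast
      define a where "a = (0 - t) * u0 + t"
      define b where "b = (1 - t) * u1 + t"
      have hb: "?h1 u1 = \<gamma> b" by (simp add: sp_def b_def)
      have ha: "?h0 u0 = \<gamma> a" by (simp add: sp_def a_def)
      have b01: "b \<in> {0..1}" using aff01[of u1 t 1] u1(1,2) t(1) unfolding b_def by auto
      have a01: "a \<in> {0..1}" using aff01[of u0 t 0] u0(1,2) t(1) unfolding a_def by auto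
      have "u1 \<noteq> 0"
      proof
        assume "u1 = 0"
        then have "?h1 u1 = \<gamma> t" by (simp add: sp_def)
        then show False using u1(4) t(2) intD by simp
      qed
      then have "?h1 u1 \<in> closure D" using u1(5) by blast
      then have fb: "\<gamma> b \<in> frontier D" using u1(4) hb by (simp add: frontier_def)
      have "u0 \<noteq> 0"
      proof
        assume "u0 = 0"
        then have "?h0 u0 = \<gamma> t" by (simp add: sp_def)
        then show False using u0(4) t(2) intD by simp
      qed
      then have "?h0 u0 \<in> closure D" using u0(5) by blast
      then have fa: "\<gamma> a \<in> frontier D" using u0(4) ha by (simp add: frontier_def)
      have "\<gamma> b \<notin> D" using fb intD by (simp add: frontier_def)
      then have bt: "b \<noteq> t" using t(2) by auto
      have "\<gamma> a \<notin> D" using fa intD by (simp add: frontier_def)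
      then have at: "a \<noteq> t" using t(2) by auto
      have "0 \<le> t * u0" using t01 u0(1) by simp
      then have "a \<le> t" unfolding a_def by (simp add: algebra_simps)
      then have alt: "a < t" using at by simp
      have "0 \<le> (1 - t) * u1" using t01 u1(1) by simp
      then have "t \<le> b" unfolding b_def by simp
      then have tlt: "t < b" using bt by simp
      then have ab: "a < b" using alt by simp
      have gab: "\<gamma> a \<noteq> \<gamma> b"
      proof
        assume "\<gamma> a = \<gamma> b"
        then have "a = b" using inj_onD[OF arc_imp_inj_on[OF \<gamma>(1)]] a01 b01 by blast
        then show False using ab by simp
      qed
      have arcab: "arc (sp a b \<gamma>)" using arc_sp[OF \<gamma>(1) a01 b01] ab by simp
      have imgab: "path_image (sp a b \<gamma>) \<subseteq> P"
      proof
        fix z assume "z \<in> path_image (sp a b \<gamma>)"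
        then obtain s where s: "a \<le> s" "s \<le> b" "z = \<gamma> s" using ab by (auto simp: path_image_sp)
        have DP: "D \<subseteq> P" unfolding P_def by (rule closure_subset)
        have fDP: "frontier D \<subseteq> P" unfolding P_def frontier_def by auto
        consider "s = a" | "s = b" | "a < s" "s \<le> t" | "t \<le> s" "s < b" using s by linarith
        then show "z \<in> P"
        proof cases
          case 1 then show ?thesis using s fa fDP by auto
        next
          case 2 then show ?thesis using s fb fDP by auto
        next
          case 3
          have tpos: "0 < t" using alt a01 by simp
          define y where "y = (t - s) / t"
          have y0: "0 \<le> y" unfolding y_def using 3 tpos by simp
          have "t - s < t * u0" using 3 unfolding a_def by (simp add: algebra_simps)
          then have yl: "y < u0" unfolding y_def using tpos by (simp add: divide_less_eq mult.commute)
          have "(0 - t) * y + t = s" unfolding y_def using tpos by (simp add: field_simps)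
          then have "?h0 y = \<gamma> s" by (simp add: sp_def)
          then have "\<gamma> s \<in> D" using u0(3)[of y] y0 yl intD by simp
          then show ?thesis using s DP by auto
        next
          case 4
          have tl1: "t < 1" using tlt b01 by simp
          define y where "y = (s - t) / (1 - t)"
          have y0: "0 \<le> y" unfolding y_def using 4 tl1 by simp
          have "s - t < (1 - t) * u1" using 4 unfolding b_def by (simp add: algebra_simps)
          then have yl: "y < u1" unfolding y_def using tl1 by (simp add: divide_less_eq mult.commute)
          have "(1 - t) * y + t = s" unfolding y_def using tl1 by (simp add: field_simps)
          then have "?h1 y = \<gamma> s" by (simp add: sp_def)
          then have "\<gamma> s \<in> D" using u1(3)[of y] y0 yl intD by simp
          then show ?thesis using s DP by auto
        qed
      qed
      have cab: "conn P (\<gamma> a) (\<gamma> b)"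
      proof -
        have "pathstart (sp a b \<gamma>) = \<gamma> a" "pathfinish (sp a b \<gamma>) = \<gamma> b" by simp_all
        then show ?thesis unfolding conn_def using arcab imgab by blast
      qed
      have "conn P p q"
      proof (cases "\<gamma> a = p")
        case True
        then have "\<gamma> b = q" using fb gab pq(2) by auto
        then show ?thesis using cab True by simp
      next
        case False
        then have "\<gamma> a = q" using fa pq(2) by auto
        moreover have "\<gamma> b = p" using fb gab pq(2) \<open>\<gamma> a = q\<close> by auto
        ultimately show ?thesis using conn_sym[OF cab] by simp
      qed
      then show False using contra by blast
    qed
    then show "\<exists>g. arc g \<and> path_image g \<subseteq> UNIV - D \<and> pathstart g = x \<and> pathfinish g = y"
      using \<gamma> by blast
  qed
qed

end
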